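(* Suppose the following statement (Conjecture 1) holds: every $D(4)$-triple $\{a,b,c\}$ has a unique extension to a $D(4)$-quadruple $\{a,b,c,d\}$ with $d>\max\{a,b,c\}$. Then the following statement (Conjecture 2) holds: if $\{a_1,b,c,d\}$ is a $D(4)$-quadruple with $a_1<b<c<d$, then $\{a_2,b,c,d\}$ is not a $D(4)$-quadruple for any positive integer $a_2$ with $a_2\neq a_1$ and $a_2<b$.
   Context: A $D(4)$-$m$-tuple is a set of $m$ distinct positive integers such that the product of any two distinct elements increased by $4$ is a perfect square ($m=3$: triple, $m=4$: quadruple). *)

theory Defs
  imports Main
begin

definition is_square :: "nat \<Rightarrow> bool" where
  "is_square n \<longleftrightarrow> (\<exists>k. n = k ^ 2)"

definition D4_tuple :: "nat \<Rightarrow> nat set \<Rightarrow> bool" where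
  "D4_tuple m S \<longleftrightarrow> finite S \<and> card S = m \<and> (\<forall>x\<in>S. 0 < x) \<and>
     (\<forall>x\<in>S. \<forall>y\<in>S. x \<noteq> y \<longrightarrow> is_square (x * y + 4))"

definition conjecture1 :: bool where
  "conjecture1 \<longleftrightarrow> (\<forall>a b c. D4_tuple 3 {a, b, c} \<longrightarrow>
     (\<exists>!d. D4_tuple 4 {a, b, c, d} \<and> d > Max {a, b, c}))"

definition conjecture2 :: bool where
  "conjecture2 \<longleftrightarrow> (\<forall>a1 b c d. D4_tuple 4 {a1, b, c, d} \<and> a1 < b \<and> b < c \<and> c < d \<longrightarrow>
     (\<forall>a2. 0 < a2 \<and> a2 \<noteq> a1 \<and> a2 < b \<longrightarrow> \<not> D4_tuple 4 {a2, b, c, d}))"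

end

theory Submission
  imports Defs
begin

lemma idents:
  fixes a b c r s t :: nat
  assumes r: "r^2 = a*b+4" and s: "s^2 = a*c+4" and t: "t^2 = b*c+4"
  shows "2*a*(2*(a+b+c)+a*b*c+r*s*t) + 16 = (a*t+r*s)^2"
    and "2*b*(2*(a+b+c)+a*b*c+r*s*t) + 16 = (b*s+r*t)^2"
    and "2*c*(2*(a+b+c)+a*b*c+r*s*t) + 16 = (c*r+s*t)^2"
proof -
  have e1: "(a*t+r*s)^2 = a^2*t^2 + 2*a*r*s*t + r^2*s^2" by (simp add: power2_eq_square algebra_simps)
  show "2*a*(2*(a+b+c)+a*b*c+r*s*t) + 16 = (a*t+r*s)^2"
    unfolding e1 r s t by (simp add: power2_eq_square algebra_simps)
  have e2: "(b*s+r*t)^2 = b^2*s^2 + 2*b*r*s*t + r^2*t^2" by (simp add: power2_eq_square algebra_simps)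
  show "2*b*(2*(a+b+c)+a*b*c+r*s*t) + 16 = (b*s+r*t)^2"
    unfolding e2 r s t by (simp add: power2_eq_square algebra_simps)
  have e3: "(c*r+s*t)^2 = c^2*r^2 + 2*c*r*s*t + s^2*t^2" by (simp add: power2_eq_square algebra_simps)
  show "2*c*(2*(a+b+c)+a*b*c+r*s*t) + 16 = (c*r+s*t)^2"
    unfolding e3 r s t by (simp add: power2_eq_square algebra_simps)
qed

lemma par:
  fixes a b c r s t :: nat
  assumes r: "r^2 = a*b+4" and s: "s^2 = a*c+4" and t: "t^2 = b*c+4"
  shows "even (a*b*c + r*s*t)" "even (a*t+r*s)" "even (b*s+r*t)" "even (c*r+s*t)"
proof -
  have er: "even r \<longleftrightarrow> even a \<or> even b"
    using arg_cong[OF r, of even] by simp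
  have es: "even s \<longleftrightarrow> even a \<or> even c"
    using arg_cong[OF s, of even] by simp
  have et: "even t \<longleftrightarrow> even b \<or> even c"
    using arg_cong[OF t, of even] by simp
  show "even (a*b*c + r*s*t)" "even (a*t+r*s)" "even (b*s+r*t)" "even (c*r+s*t)"
    using er es et by auto
qed

lemma sq_from:
  fixes x D X :: nat
  assumes "2*x*(2*D) + 16 = X^2" "even X"
  shows "is_square (x*D+4)"
proof -
  obtain y where X: "X = 2*y" using assms(2) by blast
  have "4*(x*D+4) = 4*y^2" using assms(1) unfolding X by (simp add: power2_eq_square algebra_simps)
  then have "x*D+4 = y^2" by simp
  then show ?thesis unfolding is_square_def by blast
qed

lemma key:
  assumes c1: "conjecture1" and pos: "0 < a" "a < b" "b < c" "c < d"
    and q: "D4_tuple 4 {a,b,c,d}"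
  shows "\<exists>r s t. r^2 = a*b+4 \<and> s^2 = a*c+4 \<and> t^2 = b*c+4 \<and>
           2*d = 2*(a+b+c)+a*b*c+r*s*t"
proof -
  have sq: "is_square (a*b+4)" "is_square (a*c+4)" "is_square (b*c+4)"
    "is_square (a*d+4)" "is_square (b*d+4)" "is_square (c*d+4)"
    using q pos unfolding D4_tuple_def by (auto simp: mult.commute)
  obtain r s t where r: "r^2 = a*b+4" and s: "s^2 = a*c+4" and t: "t^2 = b*c+4"
    using sq(1-3) unfolding is_square_def by metis
  define E where "E = 2*(a+b+c)+a*b*c+r*s*t"
  obtain k where k: "a*b*c+r*s*t = 2*k" using par(1)[OF r s t] by (rule evenE)
  define D where "D = a+b+c+k"
  have ED: "E = 2*D" unfolding E_def D_def using k by simp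
  have D1: "is_square (a*D+4)" using sq_from[OF _ par(2)[OF r s t]] idents(1)[OF r s t]
    unfolding E_def[symmetric] ED by simp
  have D2: "is_square (b*D+4)" using sq_from[OF _ par(3)[OF r s t]] idents(2)[OF r s t]
    unfolding E_def[symmetric] ED by simp
  have D3: "is_square (c*D+4)" using sq_from[OF _ par(4)[OF r s t]] idents(3)[OF r s t]
    unfolding E_def[symmetric] ED by simp
  have Dc: "D > c" using ED pos unfolding E_def by simp
  have trip: "D4_tuple 3 {a,b,c}"
    using pos sq unfolding D4_tuple_def by (auto simp: mult.commute)
  have mx: "Max {a,b,c} = c" using pos by (simp add: max_def)
  have qD: "D4_tuple 4 {a,b,c,D}"
    using pos sq D1 D2 D3 Dc unfolding D4_tuple_def by (auto simp: mult.commute)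
  from c1 trip have "\<exists>!d. D4_tuple 4 {a, b, c, d} \<and> d > Max {a, b, c}"
    unfolding conjecture1_def by blast
  then have "d = D" using q qD Dc pos mx by auto
  then show ?thesis using r s t ED E_def by blast
qed

lemma aux: "(2::nat)*d = 2*(a1+b+c)+P+Q \<Longrightarrow> 2*d = 2*(a2+b+c)+P'+Q' \<Longrightarrow> P<P' \<Longrightarrow> Q\<le>Q' \<Longrightarrow> a1<a2 \<Longrightarrow> False"
  by (simp add: distrib_left)

theorem mainTheorem5:
  assumes "conjecture1"
  shows "conjecture2"
  unfolding conjecture2_def
proof (intro allI impI, elim conjE)
  fix a1 b c d a2
  assume q1: "D4_tuple 4 {a1, b, c, d}" and h: "a1 < b" "b < c" "c < d"
    and h2: "0 < a2" "a2 \<noteq> a1" "a2 < b"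
  show "\<not> D4_tuple 4 {a2, b, c, d}"
  proof
    assume q2: "D4_tuple 4 {a2, b, c, d}"
    have a1p: "0 < a1" using q1 unfolding D4_tuple_def by auto
    obtain r s t where r: "r^2 = a1*b+4" and s: "s^2 = a1*c+4" and t: "t^2 = b*c+4"
      and e: "2*d = 2*(a1+b+c)+a1*b*c+r*s*t"
      using key[OF assms a1p h q1] by blast
    obtain r' s' t' where r': "r'^2 = a2*b+4" and s': "s'^2 = a2*c+4" and t': "t'^2 = b*c+4"
      and e': "2*d = 2*(a2+b+c)+a2*b*c+r'*s'*t'"
      using key[OF assms h2(1) h2(3) h(2,3) q2] by blast
    have tt: "t' = t" using t t' by (metis power2_eq_imp_eq zero_le)
    have tp: "t > 0" using t by (cases t) auto
    show False
    proof (cases "a1 < a2")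
      case True
      have "r^2 < r'^2" "s^2 < s'^2" using r s r' s' True h by auto
      then have "r < r'" "s < s'" by (simp_all add: power_less_imp_less_base)
      then have "r*s*t \<le> r'*s'*t'" unfolding tt by (simp add: mult_mono)
      moreover have "a1*b*c < a2*b*c" using True h by simp
      ultimately show False using aux[OF e e'] True by blast
    next
      case False
      then have F: "a2 < a1" using h2 by simp
      have "r'^2 < r^2" "s'^2 < s^2" using r s r' s' F h by auto
      then have "r' < r" "s' < s" by (simp_all add: power_less_imp_less_base)
      then have "r'*s'*t' \<le> r*s*t" unfolding tt by (simp add: mult_mono)
      moreover have "a2*b*c < a1*b*c" using F h by simp
      ultimately show False using aux[OF e' e] F by blast
    qed
  qed
qed

end
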